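(* Let $G$ be a connected graph whose set $V_1$ of degree-one vertices is nonempty, say $V_1=\{v_1,\dots,v_i\}$. Let $G\oplus V_1'$ be the graph with vertex set $V(G)\cup\{v_1',\dots,v_i'\}$ (where $v_1',\dots,v_i'$ are new vertices) and edge set $E(G)\cup\{v_1v_1',\dots,v_iv_i'\}$. If $G$ is strongly antimagic, then $G\oplus V_1'$ is strongly antimagic.
   Context: All graphs are finite and simple. For a graph $G=(V,E)$ and a bijection $f:E\to\{1,2,\dots,|E|\}$, the vertex sum at $u$ is $\varphi_f(u)=\sum_{e\in E(u)}f(e)$, where $E(u)$ is the set of edges incident to $u$. The labeling $f$ is antimagic if $\varphi_f(u)\neq\varphi_f(v)$ for all distinct $u,v\in V$; it is strongly antimagic if it is antimagic and moreover $\deg(u)<\deg(v)$ implies $\varphi_f(u)<\varphi_f(v)$. A graph is strongly antimagic if it admits a strongly antimagic labeling. $V_k$ denotes the set of vertices of degree $k$. *)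

theory Defs
  imports Main
begin

definition simple_graph :: "'a set \<Rightarrow> 'a set set \<Rightarrow> bool" where
  "simple_graph V E \<longleftrightarrow> finite V \<and> (\<forall>e\<in>E. e \<subseteq> V \<and> card e = 2)"

definition incident_edges :: "'a set set \<Rightarrow> 'a \<Rightarrow> 'a set set" where
  "incident_edges E u = {e \<in> E. u \<in> e}"

definition degree :: "'a set set \<Rightarrow> 'a \<Rightarrow> nat" where
  "degree E u = card (incident_edges E u)"

definition deg_vertices :: "'a set \<Rightarrow> 'a set set \<Rightarrow> nat \<Rightarrow> 'a set" where
  "deg_vertices V E k = {u \<in> V. degree E u = k}"

inductive reachable :: "'a set set \<Rightarrow> 'a \<Rightarrow> 'a \<Rightarrow> bool" for E where
  refl: "reachable E u u"
| step: "reachable E u v \<Longrightarrow> {v, w} \<in> E \<Longrightarrow> reachable E u w"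

definition connected_graph :: "'a set \<Rightarrow> 'a set set \<Rightarrow> bool" where
  "connected_graph V E \<longleftrightarrow> V \<noteq> {} \<and> (\<forall>u\<in>V. \<forall>v\<in>V. reachable E u v)"

definition vertex_sum :: "'a set set \<Rightarrow> ('a set \<Rightarrow> nat) \<Rightarrow> 'a \<Rightarrow> nat" where
  "vertex_sum E f u = (\<Sum>e\<in>incident_edges E u. f e)"

definition antimagic_labeling :: "'a set \<Rightarrow> 'a set set \<Rightarrow> ('a set \<Rightarrow> nat) \<Rightarrow> bool" where
  "antimagic_labeling V E f \<longleftrightarrow> bij_betw f E {1..card E} \<and>
     (\<forall>u\<in>V. \<forall>v\<in>V. u \<noteq> v \<longrightarrow> vertex_sum E f u \<noteq> vertex_sum E f v)"

definition strongly_antimagic_labeling :: "'a set \<Rightarrow> 'a set set \<Rightarrow> ('a set \<Rightarrow> nat) \<Rightarrow> bool" where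
  "strongly_antimagic_labeling V E f \<longleftrightarrow> antimagic_labeling V E f \<and>
     (\<forall>u\<in>V. \<forall>v\<in>V. degree E u < degree E v \<longrightarrow> vertex_sum E f u < vertex_sum E f v)"

definition strongly_antimagic :: "'a set \<Rightarrow> 'a set set \<Rightarrow> bool" where
  "strongly_antimagic V E \<longleftrightarrow> (\<exists>f. strongly_antimagic_labeling V E f)"

end

theory Submission
  imports Defs
begin

theorem lemma1:
  fixes V :: "'a set" and E :: "'a set set" and new :: "'a \<Rightarrow> 'a"
  assumes "simple_graph V E"
    and "connected_graph V E"
    and "deg_vertices V E 1 \<noteq> {}"
    and "inj_on new (deg_vertices V E 1)"
    and "new ` deg_vertices V E 1 \<inter> V = {}"
    and "strongly_antimagic V E"
  shows "strongly_antimagic (V \<union> new ` deg_vertices V E 1)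
           (E \<union> (\<lambda>v. {v, new v}) ` deg_vertices V E 1)"
proof -
  define L where "L = deg_vertices V E 1"
  from assms(6) obtain f where f: "strongly_antimagic_labeling V E f"
    unfolding strongly_antimagic_def by blast
  define p where "p = vertex_sum E f"
  define i where "i = card L"
  define m where "m = card E"
  define h where "h = (\<lambda>v. {v, new v})"
  define N where "N = h ` L"
  define V' where "V' = V \<union> new ` L"
  define E' where "E' = E \<union> N"
  define g where "g = (\<lambda>v. card {w\<in>L. p w \<le> p v})"
  define f' where "f' = (\<lambda>e. if e \<in> E then f e + i else g (inv_into L h e))"
  have finV: "finite V" using assms(1) unfolding simple_graph_def by blast
  have EV: "\<And>e. e \<in> E \<Longrightarrow> e \<subseteq> V" using assms(1) unfolding simple_graph_def by blast
  have finE: "finite E" using finite_subset[of E "Pow V"] EV finV by auto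
  have LV: "L \<subseteq> V" by (auto simp: L_def deg_vertices_def)
  have finL: "finite L" using LV finV finite_subset by blast
  have Lne: "L \<noteq> {}" using assms(3) L_def by simp
  have i1: "i \<ge> 1" using Lne finL i_def by (simp add: Suc_le_eq card_gt_0_iff)
  have newV: "\<And>v. v\<in>L \<Longrightarrow> new v \<notin> V" using assms(5) L_def by auto
  have injn: "inj_on new L" using assms(4) L_def by simp
  have degL: "\<And>v. v \<in> L \<Longrightarrow> degree E v = 1" by (auto simp: L_def deg_vertices_def)
  have degNL: "\<And>v. v \<in> V \<Longrightarrow> v \<notin> L \<Longrightarrow> degree E v \<noteq> 1" by (auto simp: L_def deg_vertices_def)
  have finInc: "\<And>u. finite (incident_edges E u)" using finE by (simp add: incident_edges_def)
  have bijf: "bij_betw f E {1..m}" and anti: "\<forall>u\<in>V. \<forall>v\<in>V. u\<noteq>v \<longrightarrow> p u \<noteq> p v"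
    and strong: "\<forall>u\<in>V. \<forall>v\<in>V. degree E u < degree E v \<longrightarrow> p u < p v"
    using f unfolding strongly_antimagic_labeling_def antimagic_labeling_def p_def m_def by auto
  have p0: "\<And>u. degree E u = 0 \<Longrightarrow> p u = 0"
  proof -
    fix u assume "degree E u = 0"
    then have "incident_edges E u = {}" using finInc[of u] by (simp add: degree_def)
    then show "p u = 0" by (simp add: p_def vertex_sum_def)
  qed
  have gmono: "\<And>v w. v\<in>L \<Longrightarrow> w\<in>L \<Longrightarrow> p v < p w \<Longrightarrow> g v < g w"
  proof -
    fix v w assume "v\<in>L" "w\<in>L" "p v < p w"
    then have "{x\<in>L. p x \<le> p v} \<subset> {x\<in>L. p x \<le> p w}"
      by (auto intro!: psubsetI) (metis (mono_tags, lifting) mem_Collect_eq order_refl not_le)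
    then show "g v < g w" unfolding g_def by (rule psubset_card_mono[rotated]) (use finL in auto)
  qed
  have gpos: "\<And>v. v\<in>L \<Longrightarrow> 1 \<le> g v"
  proof -
    fix v assume "v \<in> L"
    then have "v \<in> {x\<in>L. p x \<le> p v}" by auto
    then show "1 \<le> g v" unfolding g_def using finL
      by (metis (no_types, lifting) One_nat_def Suc_leI card_gt_0_iff empty_iff finite_subset mem_Collect_eq subsetI)
  qed
  have gle: "\<And>v. g v \<le> i" unfolding g_def i_def by (rule card_mono[OF finL]) auto
  have ginj: "inj_on g L"
  proof (rule inj_onI)
    fix v w assume v: "v \<in> L" and w: "w \<in> L" and e: "g v = g w"
    show "v = w"
    proof (rule ccontr)
      assume "v \<noteq> w"
      then have "p v \<noteq> p w" using anti v w LV by auto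
      then show False using gmono[OF v w] gmono[OF w v] e by linarith
    qed
  qed
  have gbij: "bij_betw g L {1..i}"
  proof -
    have sub: "g ` L \<subseteq> {1..i}" using gpos gle by auto
    have "card (g ` L) = card {1..i}" using card_image[OF ginj] i_def by simp
    then have "g ` L = {1..i}" using card_subset_eq[OF _ sub] by simp
    then show ?thesis using ginj by (simp add: bij_betw_def)
  qed
  have hinj: "inj_on h L"
  proof (rule inj_onI)
    fix v w assume v: "v \<in> L" and w: "w \<in> L" and e: "h v = h w"
    then have "v \<in> {w, new w}" by (auto simp: h_def)
    moreover have "v \<noteq> new w" using newV[OF w] v LV by auto
    ultimately show "v = w" by auto
  qed
  have hnE: "\<And>v. v \<in> L \<Longrightarrow> h v \<notin> E" using EV newV by (auto simp: h_def)
  have EN: "E \<inter> N = {}" using hnE N_def by auto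
  have cardN: "card N = i" using card_image[OF hinj] N_def i_def by simp
  have finN: "finite N" using finL N_def by simp
  have cardE': "card E' = m + i" using card_Un_disjoint[OF finE finN EN] E'_def m_def cardN by simp
  have b1: "bij_betw f' E {i+1..i+m}"
  proof -
    have "bij_betw (\<lambda>e. f e + i) E {i+1..i+m}"
      unfolding bij_betw_def
    proof
      show "inj_on (\<lambda>e. f e + i) E" using bijf unfolding bij_betw_def inj_on_def by auto
      have "(\<lambda>e. f e + i) ` E = (\<lambda>x. x + i) ` (f ` E)" by auto
      also have "\<dots> = {i+1..i+m}" using bijf by (simp add: bij_betw_def add.commute)
      finally show "(\<lambda>e. f e + i) ` E = {i+1..i+m}" .
    qed
    then show ?thesis by (subst bij_betw_cong[where g="\<lambda>e. f e + i"]) (auto simp: f'_def)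
  qed
  have b2: "bij_betw f' N {1..i}"
  proof -
    have "bij_betw h L N" using hinj N_def by (simp add: bij_betw_def)
    then have "bij_betw (g \<circ> inv_into L h) N {1..i}"
      using bij_betw_trans[OF bij_betw_inv_into gbij] by blast
    then show ?thesis using EN by (subst bij_betw_cong[where g="g \<circ> inv_into L h"]) (auto simp: f'_def)
  qed
  have bij': "bij_betw f' E' {1..card E'}"
  proof -
    have "bij_betw f' (E \<union> N) ({i+1..i+m} \<union> {1..i})"
      by (rule bij_betw_combine[OF b1 b2]) auto
    moreover have "{i+1..i+m} \<union> {1..i} = {1..card E'}" using cardE' by auto
    ultimately show ?thesis using E'_def by simp
  qed
  have incV: "\<And>u. u \<in> V \<Longrightarrow> incident_edges E' u = incident_edges E u \<union> (if u \<in> L then {h u} else {})"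
  proof -
    fix u assume u: "u \<in> V"
    have "\<And>v. v \<in> L \<Longrightarrow> u \<in> h v \<longleftrightarrow> u = v" using newV u by (auto simp: h_def)
    then show "incident_edges E' u = incident_edges E u \<union> (if u \<in> L then {h u} else {})"
      unfolding incident_edges_def E'_def N_def using u newV by (auto simp: h_def)
  qed
  have incN: "\<And>v. v \<in> L \<Longrightarrow> incident_edges E' (new v) = {h v}"
  proof -
    fix v assume v: "v \<in> L"
    have a: "\<And>e. e \<in> E \<Longrightarrow> new v \<notin> e" using EV newV[OF v] by blast
    have b: "\<And>w. w \<in> L \<Longrightarrow> new v \<in> h w \<longleftrightarrow> w = v"
      using newV[OF v] LV injn v by (auto simp: h_def inj_on_def)
    show "incident_edges E' (new v) = {h v}"
      unfolding incident_edges_def E'_def N_def using a b v newV[OF v] LV by (auto simp: h_def)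
  qed
  have f'h: "\<And>v. v \<in> L \<Longrightarrow> f' (h v) = g v"
    using hnE inv_into_f_f[OF hinj] by (simp add: f'_def)
  have sumE: "\<And>u. (\<Sum>e\<in>incident_edges E u. f' e) = p u + degree E u * i"
  proof -
    fix u
    have "(\<Sum>e\<in>incident_edges E u. f' e) = (\<Sum>e\<in>incident_edges E u. f e + i)"
      by (rule sum.cong) (auto simp: f'_def incident_edges_def)
    also have "\<dots> = p u + degree E u * i"
      by (simp add: sum.distrib p_def vertex_sum_def degree_def)
    finally show "(\<Sum>e\<in>incident_edges E u. f' e) = p u + degree E u * i" .
  qed
  have SV: "\<And>u. u\<in>V \<Longrightarrow> u\<notin>L \<Longrightarrow> degree E' u = degree E u \<and> vertex_sum E' f' u = p u + degree E u * i"
    using incV sumE by (simp add: degree_def vertex_sum_def)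
  have SL: "\<And>u. u\<in>L \<Longrightarrow> degree E' u = 2 \<and> vertex_sum E' f' u = p u + i + g u"
  proof -
    fix u assume u: "u \<in> L"
    have ni: "h u \<notin> incident_edges E u" using hnE[OF u] by (simp add: incident_edges_def)
    have inc: "incident_edges E' u = insert (h u) (incident_edges E u)" using incV[of u] u LV by auto
    show "degree E' u = 2 \<and> vertex_sum E' f' u = p u + i + g u"
      using degL[OF u] ni finInc[of u] sumE[of u] f'h[OF u]
      unfolding degree_def vertex_sum_def inc by simp
  qed
  have SN: "\<And>v. v\<in>L \<Longrightarrow> degree E' (new v) = 1 \<and> vertex_sum E' f' (new v) = g v"
    using incN f'h by (simp add: degree_def vertex_sum_def)
  let ?D = "degree E'" and ?S = "vertex_sum E' f'"
  have core: "\<And>x y. x\<in>V' \<Longrightarrow> y\<in>V' \<Longrightarrow> x\<noteq>y \<Longrightarrow>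
     (?D x < ?D y \<longrightarrow> ?S x < ?S y) \<and> (?D x = ?D y \<longrightarrow> ?S x \<noteq> ?S y)"
  proof -
    fix x y assume x: "x\<in>V'" and y: "y\<in>V'" and xy: "x\<noteq>y"
    have cls: "\<And>z. z \<in> V' \<Longrightarrow> (z \<in> V \<and> z \<notin> L) \<or> z \<in> L \<or> (\<exists>v\<in>L. z = new v)"
      by (auto simp: V'_def)
    show "(?D x < ?D y \<longrightarrow> ?S x < ?S y) \<and> (?D x = ?D y \<longrightarrow> ?S x \<noteq> ?S y)"
    proof -
      { assume xa: "x \<in> V" "x \<notin> L" and ya: "y \<in> V" "y \<notin> L"
        note X = SV[OF xa] and Y = SV[OF ya]
        have "degree E x < degree E y \<Longrightarrow> p x < p y" using strong xa ya by blast
        then have "degree E x < degree E y \<Longrightarrow> p x + degree E x * i < p y + degree E y * i"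
          by (simp add: add_less_le_mono)
        moreover have "p x \<noteq> p y" using anti xa ya xy by blast
        ultimately have ?thesis using X Y by auto }
      moreover
      { assume xa: "x \<in> V" "x \<notin> L" and ya: "y \<in> L"
        note X = SV[OF xa] and Y = SL[OF ya]
        have ?thesis
        proof (cases "degree E x = 0")
          case True
          then show ?thesis using X Y p0 i1 by auto
        next
          case False
          then have d2: "degree E x \<ge> 2" using degNL xa by (metis One_nat_def less_2_cases not_less)
          have "p y < p x" using strong xa ya LV degL[OF ya] False degNL[OF xa] by auto
          moreover have "2*i \<le> degree E x * i" using d2 by simp
          ultimately have "p y + i + g y < p x + degree E x * i" using gle[of y] by linarith
          then show ?thesis using X Y d2 by auto
        qed }
      moreover
      { fix w assume xa: "x \<in> V" "x \<notin> L" and ya: "y = new w" "w \<in> L"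
        note X = SV[OF xa] and Y = SN[OF ya(2)]
        have ?thesis using X Y ya p0 gpos[OF ya(2)] degNL[OF xa] by auto }
      moreover
      { assume xa: "x \<in> L" and ya: "y \<in> V" "y \<notin> L"
        note X = SL[OF xa] and Y = SV[OF ya]
        have ?thesis
        proof (cases "degree E y \<ge> 2")
          case True
          have "p x < p y" using strong xa ya LV degL[OF xa] True by auto
          moreover have "2*i \<le> degree E y * i" using True by simp
          ultimately have "p x + i + g x < p y + degree E y * i" using gle[of x] by linarith
          then show ?thesis using X Y by auto
        next
          case False
          then show ?thesis using X Y by auto
        qed }
      moreover
      { assume xa: "x \<in> L" and ya: "y \<in> L"
        note X = SL[OF xa] and Y = SL[OF ya]
        have "p x \<noteq> p y" using anti xa ya xy LV by blast
        then have "p x < p y \<or> p y < p x" by linarith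
        then have ?thesis using X Y gmono[OF xa ya] gmono[OF ya xa] by auto }
      moreover
      { fix w assume xa: "x \<in> L" and ya: "y = new w" "w \<in> L"
        have ?thesis using SL[OF xa] SN[OF ya(2)] ya by auto }
      moreover
      { fix v assume xa: "x = new v" "v \<in> L" and ya: "y \<in> V" "y \<notin> L"
        note X = SN[OF xa(2)] and Y = SV[OF ya]
        have ?thesis
        proof (cases "degree E y \<ge> 2")
          case True
          have "2*i \<le> degree E y * i" using True by simp
          then have "g v < p y + degree E y * i" using gle[of v] i1 by linarith
          then show ?thesis using X Y xa True by auto
        next
          case False
          then show ?thesis using X Y xa degNL[OF ya] by auto
        qed }
      moreover
      { fix v assume xa: "x = new v" "v \<in> L" and ya: "y \<in> L"
        have ?thesis using SN[OF xa(2)] SL[OF ya] xa gle[of v] gpos[OF ya] by auto }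
      moreover
      { fix v w assume xa: "x = new v" "v \<in> L" and ya: "y = new w" "w \<in> L"
        have "v \<noteq> w" using xa ya xy by auto
        then have "g v \<noteq> g w" using ginj xa ya by (auto simp: inj_on_def)
        then have ?thesis using SN[OF xa(2)] SN[OF ya(2)] xa ya by auto }
      ultimately show ?thesis using cls[OF x] cls[OF y] by metis
    qed
  qed
  have "strongly_antimagic_labeling V' E' f'"
    unfolding strongly_antimagic_labeling_def antimagic_labeling_def
  proof (intro conjI ballI impI)
    show "bij_betw f' E' {1..card E'}" by (rule bij')
  next
    fix u v assume u: "u \<in> V'" and v: "v \<in> V'" and uv: "u \<noteq> v"
    show "?S u \<noteq> ?S v"
    proof (cases "?D u < ?D v")
      case True then show ?thesis using core[OF u v uv] by auto
    next
      case False
      then have "?D v < ?D u \<or> ?D u = ?D v" by linarith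
      then show ?thesis using core[OF u v uv] core[OF v u] uv by fastforce
    qed
  next
    fix u v assume u: "u \<in> V'" and v: "v \<in> V'" and d: "?D u < ?D v"
    then have "u \<noteq> v" by auto
    then show "?S u < ?S v" using core[OF u v] d by auto
  qed
  then show ?thesis unfolding strongly_antimagic_def V'_def E'_def N_def h_def L_def by blast
qed

end
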